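(* Let $d\ge 2$ be even and fix a base $\theta>1$. Let $(u_j)_{j\ge 1}$ be a real sequence and let ${\bm v}\in\mathbb{R}^d$ with $\|{\bm v}\|_2=1$. For each $n\ge 1$ let $\boldsymbol{u}_n=(u_1,\dots,u_n)^\top\in\mathbb{R}^n$ and $\boldsymbol{X}_n=\boldsymbol{u}_n{\bm v}^\top\in\mathbb{R}^{n\times d}$. Assume: (i) there exist constants $0<c\le C<\infty$ with $c\le |u_j|\le C$ for all $j$; (ii) $\sum_{j=1}^{n-1}|u_{j+1}^2-u_j^2| = o(n)$ as $n\to\infty$; (iii) (non-resonance of frequencies) $e^{2i\theta_k}\neq 1$ for all $1\le k\le d/2$, and $e^{i(\theta_k+\theta_l)}\neq 1$, $e^{i(\theta_k-\theta_l)}\neq 1$ for all $k\neq l$ (the paper justifies this by the $\theta_k$ and $(\theta_k\pm\theta_l)/2$ being irrational multiples of $\pi$). Then, as $n\to\infty$, $$\frac{\|\mathcal{R}(\boldsymbol{X}_n)\|_2}{\|\boldsymbol{X}_n\|_2}=\frac{1}{\sqrt 2}\max_{1\le k\le d/2}\alpha_k+o(1),$$ where $\alpha_k:=\sqrt{v_{2k-1}^2+v_{2k}^2}$, and moreover $\max_k\alpha_k\in[\sqrt{2/d},\,1]$.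
   Context: RoPE action: for $\boldsymbol{X}=[\boldsymbol{x}_1,\dots,\boldsymbol{x}_n]^\top\in\mathbb{R}^{n\times d}$ ($d$ even), $\mathcal{R}(\boldsymbol{X}):=[\boldsymbol{R}_1\boldsymbol{x}_1,\dots,\boldsymbol{R}_n\boldsymbol{x}_n]^\top$, where $\boldsymbol{R}_j=\mathrm{Diag}(\boldsymbol{R}_{j,\theta_1},\dots,\boldsymbol{R}_{j,\theta_{d/2}})\in\mathbb{R}^{d\times d}$ is block diagonal with $2\times2$ blocks $\boldsymbol{R}_{j,\theta_k}=\begin{bmatrix}\cos(j\theta_k)&-\sin(j\theta_k)\\ \sin(j\theta_k)&\cos(j\theta_k)\end{bmatrix}$ and frequencies $\theta_k=\theta^{-2(k-1)/d}$, $1\le k\le d/2$, for a base $\theta>1$. The $k$-th rotation plane of a vector ${\bm v}$ is the subvector $(v_{2k-1},v_{2k})$. $\|\cdot\|_2$ denotes the Euclidean norm of a vector and the spectral norm (largest singular value) of a matrix. *)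

theory Defs
  imports "HOL-Analysis.Analysis" "HOL-Library.Landau_Symbols"
begin

text \<open>Matrices of size n x d are represented as functions nat => nat => real,
  with 1-based indices i in {1..n}, j in {1..d}; vectors in R^d as nat => real
  with indices {1..d}.\<close>

definition rope_freq :: "real \<Rightarrow> nat \<Rightarrow> nat \<Rightarrow> real" where
  "rope_freq \<theta> d k = \<theta> powr (- 2 * (real k - 1) / real d)"

text \<open>RoPE action: row i is multiplied by the block diagonal rotation R_i.
  Coordinate j lies in rotation plane k = (j+1) div 2, i.e. the pair (2k-1, 2k).\<close>
definition rope :: "real \<Rightarrow> nat \<Rightarrow> (nat \<Rightarrow> nat \<Rightarrow> real) \<Rightarrow> nat \<Rightarrow> nat \<Rightarrow> real" where
  "rope \<theta> d X i j =
     (let k = (j + 1) div 2; a = real i * rope_freq \<theta> d k in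
      if odd j then cos a * X i j - sin a * X i (j + 1)
      else sin a * X i (j - 1) + cos a * X i j)"

definition spec_norm :: "nat \<Rightarrow> nat \<Rightarrow> (nat \<Rightarrow> nat \<Rightarrow> real) \<Rightarrow> real" where
  "spec_norm n d A = Sup {sqrt (\<Sum>i=1..n. (\<Sum>j=1..d. A i j * x j)\<^sup>2) | x.
                          (\<Sum>j=1..d. (x j)\<^sup>2) = 1}"

definition plane_norm :: "(nat \<Rightarrow> real) \<Rightarrow> nat \<Rightarrow> real" where
  "plane_norm v k = sqrt ((v (2*k - 1))\<^sup>2 + (v (2*k))\<^sup>2)"

end

theory Submission
  imports Defs
begin

lemma sum_pairs: "(\<Sum>j=1..2*m. f j) = (\<Sum>k=1..m. f (2*k-1) + f (2*k))" for m :: nat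
proof (induction m)
  case 0 then show ?case by simp
next
  case (Suc m)
  have "{1..2*Suc m} = insert (2*m+2) (insert (2*m+1) {1..2*m})" by auto
  then have "(\<Sum>j=1..2*Suc m. f j) = f (2*m+2) + (f (2*m+1) + (\<Sum>j=1..2*m. f j))"
    by simp
  then show ?case using Suc by (simp add: ac_simps)
qed

lemma osc_identity:
  fixes f :: "nat \<Rightarrow> real" and z :: complex
  assumes "n \<ge> 1"
  shows "(1 - z) * (\<Sum>j=1..n. of_real (f j) * z^j) =
     of_real (f 1) * z - of_real (f n) * z^(n+1) + (\<Sum>j=1..n-1. of_real (f (j+1) - f j) * z^(j+1))"
  using assms
proof (induction n rule: dec_induct)
  case base then show ?case by (simp add: algebra_simps power2_eq_square)
next
  case (step n)
  have e: "{1..Suc n - 1} = insert n {1..n-1}" using step(1) by auto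
  have "(1 - z) * (\<Sum>j=1..Suc n. of_real (f j) * z^j) = (1 - z) * (\<Sum>j=1..n. of_real (f j) * z^j) + (1-z) * of_real (f (Suc n)) * z^(Suc n)"
    by (simp add: algebra_simps)
  also have "\<dots> = of_real (f 1) * z - of_real (f (Suc n)) * z^(Suc n+1) + (\<Sum>j=1..Suc n-1. of_real (f (j+1) - f j) * z^(j+1))"
  proof -
    have s: "(\<Sum>j=1..Suc n-1. of_real (f (j+1) - f j) * z^(j+1)) = (\<Sum>j=1..n-1. of_real (f (j+1) - f j) * z^(j+1)) + of_real (f (n+1) - f n) * z^(n+1)"
      unfolding e using step(1) by (subst sum.insert) auto
    show ?thesis unfolding s step(3) by (simp add: algebra_simps)
  qed
  finally show ?case .
qed

lemma osc_bound:
  fixes f :: "nat \<Rightarrow> real" and z :: complex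
  assumes "n \<ge> 1" "norm z = 1" "z \<noteq> 1" "\<forall>j\<ge>1. \<bar>f j\<bar> \<le> K"
  shows "norm (\<Sum>j=1..n. of_real (f j) * z^j) \<le> (2*K + (\<Sum>j=1..n-1. \<bar>f (j+1) - f j\<bar>)) / norm (1 - z)"
proof -
  have nz: "norm (1 - z) > 0" using assms(3) by simp
  have "norm (1 - z) * norm (\<Sum>j=1..n. of_real (f j) * z^j) = norm (of_real (f 1) * z - of_real (f n) * z^(n+1) + (\<Sum>j=1..n-1. of_real (f (j+1) - f j) * z^(j+1)))"
    using osc_identity[OF assms(1), of z f] by (metis norm_mult)
  also have "\<dots> \<le> norm (of_real (f 1) * z) + norm (of_real (f n) * z^(n+1)) + norm (\<Sum>j=1..n-1. of_real (f (j+1) - f j) * z^(j+1))"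
    by (metis (no_types, lifting) add_mono norm_diff_ineq norm_triangle_ineq order_refl order_trans norm_triangle_ineq4)
  also have "\<dots> \<le> K + K + (\<Sum>j=1..n-1. \<bar>f (j+1) - f j\<bar>)"
  proof (intro add_mono)
    show "norm (of_real (f 1) * z) \<le> K" using assms by (simp add: norm_mult)
    show "norm (of_real (f n) * z^(n+1)) \<le> K" using assms by (simp add: norm_mult norm_power)
    have "norm (\<Sum>j=1..n-1. of_real (f (j+1) - f j) * z^(j+1)) \<le> (\<Sum>j=1..n-1. norm (of_real (f (j+1) - f j) * z^(j+1)))"
      by (rule norm_sum)
    also have "\<dots> = (\<Sum>j=1..n-1. \<bar>f (j+1) - f j\<bar>)" using assms(2) by (simp add: norm_mult norm_power del: of_real_diff)
    finally show "norm (\<Sum>j=1..n-1. of_real (f (j+1) - f j) * z^(j+1)) \<le> (\<Sum>j=1..n-1. \<bar>f (j+1) - f j\<bar>)" .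
  qed
  finally show ?thesis using nz by (simp add: field_simps)
qed


lemma osc_lim_norm:
  fixes u :: "nat \<Rightarrow> real"
  assumes c: "0 < c" and u: "\<forall>j\<ge>1. c \<le> \<bar>u j\<bar> \<and> \<bar>u j\<bar> \<le> C"
    and V: "(\<lambda>n. (\<Sum>j=1..n-1. \<bar>(u (j+1))\<^sup>2 - (u j)\<^sup>2\<bar>) / real n) \<longlonglongrightarrow> 0"
    and z: "cis \<omega> \<noteq> 1"
  shows "(\<lambda>n. norm (\<Sum>i=1..n. of_real ((u i)\<^sup>2) * cis \<omega> ^ i) / (\<Sum>i=1..n. (u i)\<^sup>2)) \<longlonglongrightarrow> 0"
proof -
  define N where "N = norm (1 - cis \<omega>)"
  have N: "N > 0" using z unfolding N_def by simp
  have c2: "c\<^sup>2 > 0" using c by simp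
  have ub: "\<forall>j\<ge>1. \<bar>(u j)\<^sup>2\<bar> \<le> C\<^sup>2"
  proof (intro allI impI)
    fix j :: nat assume "j \<ge> 1"
    then have "\<bar>u j\<bar> \<le> C" "c \<le> \<bar>u j\<bar>" using u by auto
    then show "\<bar>(u j)\<^sup>2\<bar> \<le> C\<^sup>2"
      by (metis abs_ge_zero abs_power2 order_trans power2_abs power_mono)
  qed
  have Sge: "(\<Sum>i=1..n. (u i)\<^sup>2) \<ge> c\<^sup>2 * real n" for n
  proof -
    have "(\<Sum>i=1..n. c\<^sup>2) \<le> (\<Sum>i=1..n. (u i)\<^sup>2)"
    proof (rule sum_mono)
      fix i assume "i \<in> {1..n}"
      then have "c \<le> \<bar>u i\<bar>" using u by auto
      then show "c\<^sup>2 \<le> (u i)\<^sup>2" using c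
        by (metis abs_of_pos less_imp_le power2_abs power_mono)
    qed
    then show ?thesis by (simp add: mult.commute)
  qed
  define R where "R n = (2 * C\<^sup>2 / (N * c\<^sup>2)) * (1 / real n) + (1 / (N * c\<^sup>2)) * ((\<Sum>j=1..n-1. \<bar>(u (j+1))\<^sup>2 - (u j)\<^sup>2\<bar>) / real n)" for n
  have R: "R \<longlonglongrightarrow> 0"
  proof -
    have "R \<longlonglongrightarrow> (2 * C\<^sup>2 / (N * c\<^sup>2)) * 0 + (1 / (N * c\<^sup>2)) * 0"
      unfolding R_def by (intro tendsto_intros V lim_const_over_n[of 1, simplified] lim_inverse_n')
    then show ?thesis by simp
  qed
  show ?thesis
  proof (rule tendsto_sandwich[OF _ _ tendsto_const R])
    show "\<forall>\<^sub>F n in sequentially. 0 \<le> norm (\<Sum>i=1..n. of_real ((u i)\<^sup>2) * cis \<omega> ^ i) / (\<Sum>i=1..n. (u i)\<^sup>2)"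
      by (intro always_eventually allI divide_nonneg_nonneg norm_ge_zero sum_nonneg zero_le_power2)
    show "\<forall>\<^sub>F n in sequentially. norm (\<Sum>i=1..n. of_real ((u i)\<^sup>2) * cis \<omega> ^ i) / (\<Sum>i=1..n. (u i)\<^sup>2) \<le> R n"
    proof (rule eventually_sequentiallyI[of 1])
      fix n :: nat assume n: "n \<ge> 1"
      define V where "V = (\<Sum>j=1..n-1. \<bar>(u (j+1))\<^sup>2 - (u j)\<^sup>2\<bar>)"
      have V0: "V \<ge> 0" unfolding V_def by (simp add: sum_nonneg)
      have b: "norm (\<Sum>i=1..n. of_real ((u i)\<^sup>2) * cis \<omega> ^ i) \<le> (2 * C\<^sup>2 + V) / N"
        unfolding N_def V_def by (rule osc_bound[OF n _ z ub]) simp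
      have S: "(\<Sum>i=1..n. (u i)\<^sup>2) \<ge> c\<^sup>2 * real n" by (rule Sge)
      have pos: "c\<^sup>2 * real n > 0" using n c2 by simp
      have "norm (\<Sum>i=1..n. of_real ((u i)\<^sup>2) * cis \<omega> ^ i) / (\<Sum>i=1..n. (u i)\<^sup>2) \<le> ((2 * C\<^sup>2 + V) / N) / (c\<^sup>2 * real n)"
        using b S pos by (meson frac_le norm_ge_zero order_trans)
      also have "\<dots> = R n" unfolding R_def V_def[symmetric] using N c2 n by (simp add: field_simps)
      finally show "norm (\<Sum>i=1..n. of_real ((u i)\<^sup>2) * cis \<omega> ^ i) / (\<Sum>i=1..n. (u i)\<^sup>2) \<le> R n" .
    qed
  qed
qed

lemma osc_lim_cos_sin:
  fixes u :: "nat \<Rightarrow> real"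
  assumes c: "0 < c" and u: "\<forall>j\<ge>1. c \<le> \<bar>u j\<bar> \<and> \<bar>u j\<bar> \<le> C"
    and V: "(\<lambda>n. (\<Sum>j=1..n-1. \<bar>(u (j+1))\<^sup>2 - (u j)\<^sup>2\<bar>) / real n) \<longlonglongrightarrow> 0"
    and z: "cis \<omega> \<noteq> 1"
  shows "(\<lambda>n. \<bar>\<Sum>i=1..n. (u i)\<^sup>2 * cos (real i * \<omega>)\<bar> / (\<Sum>i=1..n. (u i)\<^sup>2)) \<longlonglongrightarrow> 0"
    and "(\<lambda>n. \<bar>\<Sum>i=1..n. (u i)\<^sup>2 * sin (real i * \<omega>)\<bar> / (\<Sum>i=1..n. (u i)\<^sup>2)) \<longlonglongrightarrow> 0"
proof -
  note L = osc_lim_norm[OF c u V z]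
  have re: "(\<Sum>i=1..n. (u i)\<^sup>2 * cos (real i * \<omega>)) = Re (\<Sum>i=1..n. of_real ((u i)\<^sup>2) * cis \<omega> ^ i)" for n
    unfolding Complex.DeMoivre by simp
  have im: "(\<Sum>i=1..n. (u i)\<^sup>2 * sin (real i * \<omega>)) = Im (\<Sum>i=1..n. of_real ((u i)\<^sup>2) * cis \<omega> ^ i)" for n
    unfolding Complex.DeMoivre by simp
  show "(\<lambda>n. \<bar>\<Sum>i=1..n. (u i)\<^sup>2 * cos (real i * \<omega>)\<bar> / (\<Sum>i=1..n. (u i)\<^sup>2)) \<longlonglongrightarrow> 0"
    unfolding re
    by (rule tendsto_sandwich[OF _ _ tendsto_const L]; intro always_eventually allI divide_right_mono abs_Re_le_cmod divide_nonneg_nonneg abs_ge_zero sum_nonneg zero_le_power2)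
  show "(\<lambda>n. \<bar>\<Sum>i=1..n. (u i)\<^sup>2 * sin (real i * \<omega>)\<bar> / (\<Sum>i=1..n. (u i)\<^sup>2)) \<longlonglongrightarrow> 0"
    unfolding im
    by (rule tendsto_sandwich[OF _ _ tendsto_const L]; intro always_eventually allI divide_right_mono abs_Im_le_cmod divide_nonneg_nonneg abs_ge_zero sum_nonneg zero_le_power2)
qed


definition pA :: "(nat \<Rightarrow> real) \<Rightarrow> (nat \<Rightarrow> real) \<Rightarrow> nat \<Rightarrow> real" where
  "pA v x k = v (2*k-1) * x (2*k-1) + v (2*k) * x (2*k)"
definition pB :: "(nat \<Rightarrow> real) \<Rightarrow> (nat \<Rightarrow> real) \<Rightarrow> nat \<Rightarrow> real" where
  "pB v x k = v (2*k-1) * x (2*k) - v (2*k) * x (2*k-1)"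

lemma row_expand:
  assumes "d = 2*m"
  shows "(\<Sum>j=1..d. rope \<theta> d (\<lambda>i j. u i * v j) i j * x j) =
    u i * (\<Sum>k=1..m. cos (real i * rope_freq \<theta> d k) * pA v x k + sin (real i * rope_freq \<theta> d k) * pB v x k)"
proof -
  have "(\<Sum>j=1..d. rope \<theta> d (\<lambda>i j. u i * v j) i j * x j) =
     (\<Sum>k=1..m. rope \<theta> d (\<lambda>i j. u i * v j) i (2*k-1) * x (2*k-1) + rope \<theta> d (\<lambda>i j. u i * v j) i (2*k) * x (2*k))"
    unfolding assms by (rule sum_pairs)
  also have "\<dots> = (\<Sum>k=1..m. u i * (cos (real i * rope_freq \<theta> d k) * pA v x k + sin (real i * rope_freq \<theta> d k) * pB v x k))"
  proof (rule sum.cong[OF refl])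
    fix k assume k: "k \<in> {1..m}"
    have o: "odd (2*k-1)" using k by auto
    have e1: "(2*k-1+1) div 2 = k" "2*k-1+1 = 2*k" "(2*k+1) div 2 = k" using k by auto
    show "rope \<theta> d (\<lambda>i j. u i * v j) i (2*k-1) * x (2*k-1) + rope \<theta> d (\<lambda>i j. u i * v j) i (2*k) * x (2*k) =
      u i * (cos (real i * rope_freq \<theta> d k) * pA v x k + sin (real i * rope_freq \<theta> d k) * pB v x k)"
      unfolding rope_def Let_def pA_def pB_def using o e1 by (simp add: algebra_simps)
  qed
  also have "\<dots> = u i * (\<Sum>k=1..m. cos (real i * rope_freq \<theta> d k) * pA v x k + sin (real i * rope_freq \<theta> d k) * pB v x k)"
    by (simp add: sum_distrib_left)
  finally show ?thesis .
qed

lemma prod_to_sum: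
  fixes a b A1 B1 A2 B2 :: real
  shows "(cos a * A1 + sin a * B1) * (cos b * A2 + sin b * B2) =
    (1/2) * (cos (a - b) * (A1*A2 + B1*B2) + cos (a + b) * (A1*A2 - B1*B2)
            + sin (a + b) * (A1*B2 + B1*A2) + sin (a - b) * (B1*A2 - A1*B2))"
  by (simp add: cos_add cos_diff sin_add sin_diff algebra_simps)

lemma quad_bound:
  fixes f w Aa Bb :: "nat \<Rightarrow> real" and I K :: "nat set"
  assumes K: "finite K" and AB: "\<forall>k\<in>K. \<bar>Aa k\<bar> \<le> 1 \<and> \<bar>Bb k\<bar> \<le> 1"
  shows "\<bar>(\<Sum>i\<in>I. f i * (\<Sum>k\<in>K. cos (real i * w k) * Aa k + sin (real i * w k) * Bb k)\<^sup>2)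
          - (\<Sum>i\<in>I. f i) / 2 * (\<Sum>k\<in>K. (Aa k)\<^sup>2 + (Bb k)\<^sup>2)\<bar>
     \<le> (\<Sum>k\<in>K. \<Sum>l\<in>K. \<bar>\<Sum>i\<in>I. f i * cos (real i * (w k + w l))\<bar> + \<bar>\<Sum>i\<in>I. f i * sin (real i * (w k + w l))\<bar>
          + (if k = l then 0 else \<bar>\<Sum>i\<in>I. f i * cos (real i * (w k - w l))\<bar> + \<bar>\<Sum>i\<in>I. f i * sin (real i * (w k - w l))\<bar>))"
proof -
  define g where "g i k = cos (real i * w k) * Aa k + sin (real i * w k) * Bb k" for i k
  define Cp where "Cp k l = (\<Sum>i\<in>I. f i * cos (real i * (w k + w l)))" for k l
  define Sp where "Sp k l = (\<Sum>i\<in>I. f i * sin (real i * (w k + w l)))" for k l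
  define Cm where "Cm k l = (\<Sum>i\<in>I. f i * cos (real i * (w k - w l)))" for k l
  define Sm where "Sm k l = (\<Sum>i\<in>I. f i * sin (real i * (w k - w l)))" for k l
  define S where "S = (\<Sum>i\<in>I. f i)"
  define P where "P k l = (\<Sum>i\<in>I. f i * (g i k * g i l))" for k l
  have Q: "(\<Sum>i\<in>I. f i * (\<Sum>k\<in>K. g i k)\<^sup>2) = (\<Sum>k\<in>K. \<Sum>l\<in>K. P k l)"
  proof -
    have "(\<Sum>i\<in>I. f i * (\<Sum>k\<in>K. g i k)\<^sup>2) = (\<Sum>i\<in>I. \<Sum>k\<in>K. \<Sum>l\<in>K. f i * (g i k * g i l))"
    proof -
      have sq: "(\<Sum>k\<in>K. g i k)\<^sup>2 = (\<Sum>k\<in>K. \<Sum>l\<in>K. g i k * g i l)" for i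
        unfolding power2_eq_square by (rule sum_product)
      show ?thesis by (simp add: sq sum_distrib_left)
    qed
    also have "\<dots> = (\<Sum>k\<in>K. \<Sum>i\<in>I. \<Sum>l\<in>K. f i * (g i k * g i l))" by (rule sum.swap)
    also have "\<dots> = (\<Sum>k\<in>K. \<Sum>l\<in>K. P k l)" unfolding P_def by (simp add: sum.swap[of _ I])
    finally show ?thesis .
  qed
  have Pf: "P k l = (1/2) * (Cm k l * (Aa k*Aa l + Bb k*Bb l) + Cp k l * (Aa k*Aa l - Bb k*Bb l)
            + Sp k l * (Aa k*Bb l + Bb k*Aa l) + Sm k l * (Bb k*Aa l - Aa k*Bb l))" for k l
  proof -
    have "P k l = (\<Sum>i\<in>I. (1/2) * (f i * cos (real i * (w k - w l)) * (Aa k*Aa l + Bb k*Bb l)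
       + f i * cos (real i * (w k + w l)) * (Aa k*Aa l - Bb k*Bb l)
       + f i * sin (real i * (w k + w l)) * (Aa k*Bb l + Bb k*Aa l)
       + f i * sin (real i * (w k - w l)) * (Bb k*Aa l - Aa k*Bb l)))"
      unfolding P_def g_def
      by (rule sum.cong[OF refl], subst prod_to_sum) (simp add: algebra_simps)
    also have "\<dots> = (1/2) * (Cm k l * (Aa k*Aa l + Bb k*Bb l) + Cp k l * (Aa k*Aa l - Bb k*Bb l)
            + Sp k l * (Aa k*Bb l + Bb k*Aa l) + Sm k l * (Bb k*Aa l - Aa k*Bb l))"
      unfolding Cm_def Cp_def Sm_def Sp_def
      by (simp only: sum_distrib_left[symmetric] sum.distrib sum_distrib_right[symmetric])
    finally show ?thesis .
  qed
  have aux: "\<bar>a*b + c*e\<bar> \<le> 2" "\<bar>a*b - c*e\<bar> \<le> 2" "\<bar>y * (a*b + c*e)\<bar> \<le> 2 * \<bar>y\<bar>" "\<bar>y * (a*b - c*e)\<bar> \<le> 2 * \<bar>y\<bar>"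
    if "\<bar>a\<bar> \<le> 1" "\<bar>b\<bar> \<le> 1" "\<bar>c\<bar> \<le> 1" "\<bar>e\<bar> \<le> 1" for a b c e y :: real
  proof -
    have ab: "\<bar>a*b\<bar> \<le> 1" "\<bar>c*e\<bar> \<le> 1" using that by (simp_all add: abs_mult mult_le_one)
    show 1: "\<bar>a*b + c*e\<bar> \<le> 2" "\<bar>a*b - c*e\<bar> \<le> 2" using ab by linarith+
    show "\<bar>y * (a*b + c*e)\<bar> \<le> 2 * \<bar>y\<bar>" "\<bar>y * (a*b - c*e)\<bar> \<le> 2 * \<bar>y\<bar>"
      using 1 by (simp_all add: abs_mult mult.commute mult_left_mono)
  qed
  define H where "H k l = (if k = l then S / 2 * ((Aa k)\<^sup>2 + (Bb k)\<^sup>2) else 0)" for k l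
  define D where "D k l = \<bar>Cp k l\<bar> + \<bar>Sp k l\<bar> + (if k = l then 0 else \<bar>Cm k l\<bar> + \<bar>Sm k l\<bar>)" for k l
  have PH: "\<bar>P k l - H k l\<bar> \<le> D k l" if "k \<in> K" "l \<in> K" for k l
  proof -
    have b: "\<bar>Aa k\<bar> \<le> 1" "\<bar>Bb k\<bar> \<le> 1" "\<bar>Aa l\<bar> \<le> 1" "\<bar>Bb l\<bar> \<le> 1" using AB that by auto
    note a1 = aux(3)[OF b(1,3,2,4), of "Cm k l"] aux(4)[OF b(1,3,2,4), of "Cp k l"]
      aux(3)[OF b(1,4,2,3), of "Sp k l"] aux(4)[OF b(2,3,1,4), of "Sm k l"]
    define t1 where "t1 = Cm k l * (Aa k*Aa l + Bb k*Bb l)"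
    define t2 where "t2 = Cp k l * (Aa k*Aa l - Bb k*Bb l)"
    define t3 where "t3 = Sp k l * (Aa k*Bb l + Bb k*Aa l)"
    define t4 where "t4 = Sm k l * (Bb k*Aa l - Aa k*Bb l)"
    have tb: "\<bar>t1\<bar> \<le> 2 * \<bar>Cm k l\<bar>" "\<bar>t2\<bar> \<le> 2 * \<bar>Cp k l\<bar>" "\<bar>t3\<bar> \<le> 2 * \<bar>Sp k l\<bar>" "\<bar>t4\<bar> \<le> 2 * \<bar>Sm k l\<bar>"
      unfolding t1_def t2_def t3_def t4_def using a1 by (simp_all add: mult.commute)
    have P4: "P k l = (1/2) * (t1 + t2 + t3 + t4)" unfolding Pf t1_def t2_def t3_def t4_def ..
    show ?thesis
    proof (cases "k = l")
      case True
      have "Cm k l = S" "Sm k l = 0" unfolding Cm_def Sm_def S_def using True by simp_all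
      then have "t1 = 2 * H k l" "t4 = 0" unfolding t1_def t4_def H_def using True by (simp_all add: power2_eq_square)
      then have "P k l - H k l = (1/2) * (t2 + t3)" unfolding P4 by (simp add: field_simps)
      then have "\<bar>P k l - H k l\<bar> \<le> (1/2) * (\<bar>t2\<bar> + \<bar>t3\<bar>)" by (simp only:) (simp add: abs_mult abs_triangle_ineq)
      then show ?thesis unfolding D_def using True tb by simp
    next
      case False
      have "\<bar>t1 + t2 + t3 + t4\<bar> \<le> \<bar>t1\<bar> + \<bar>t2\<bar> + \<bar>t3\<bar> + \<bar>t4\<bar>" by linarith
      then have "\<bar>P k l - H k l\<bar> \<le> (1/2) * (\<bar>t1\<bar> + \<bar>t2\<bar> + \<bar>t3\<bar> + \<bar>t4\<bar>)"
        unfolding P4 H_def using False by simp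
      then show ?thesis unfolding D_def using False tb by simp
    qed
  qed
  have HH: "(\<Sum>k\<in>K. \<Sum>l\<in>K. H k l) = S / 2 * (\<Sum>k\<in>K. (Aa k)\<^sup>2 + (Bb k)\<^sup>2)"
    unfolding H_def using K by (simp add: sum_distrib_left)
  have "\<bar>(\<Sum>k\<in>K. \<Sum>l\<in>K. P k l) - (\<Sum>k\<in>K. \<Sum>l\<in>K. H k l)\<bar> = \<bar>\<Sum>k\<in>K. \<Sum>l\<in>K. P k l - H k l\<bar>"
    by (simp add: sum_subtractf)
  also have "\<dots> \<le> (\<Sum>k\<in>K. \<bar>\<Sum>l\<in>K. P k l - H k l\<bar>)" by (rule sum_abs)
  also have "\<dots> \<le> (\<Sum>k\<in>K. \<Sum>l\<in>K. \<bar>P k l - H k l\<bar>)" by (intro sum_mono sum_abs)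
  also have "\<dots> \<le> (\<Sum>k\<in>K. \<Sum>l\<in>K. D k l)" by (intro sum_mono PH)
  finally have fin: "\<bar>(\<Sum>k\<in>K. \<Sum>l\<in>K. P k l) - (\<Sum>k\<in>K. \<Sum>l\<in>K. H k l)\<bar> \<le> (\<Sum>k\<in>K. \<Sum>l\<in>K. D k l)" .
  show ?thesis using fin unfolding HH unfolding Q[unfolded g_def, symmetric] D_def Cp_def Sp_def Cm_def Sm_def S_def g_def .
qed


lemma spec_bounds:
  fixes A :: "nat \<Rightarrow> nat \<Rightarrow> real" and x0 :: "nat \<Rightarrow> real"
  assumes up: "\<And>x. (\<Sum>j=1..d. (x j)\<^sup>2) = 1 \<Longrightarrow> (\<Sum>i=1..n. (\<Sum>j=1..d. A i j * x j)\<^sup>2) \<le> U"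
    and x0: "(\<Sum>j=1..d. (x0 j)\<^sup>2) = 1"
    and lo: "L \<le> (\<Sum>i=1..n. (\<Sum>j=1..d. A i j * x0 j)\<^sup>2)"
  shows "sqrt L \<le> spec_norm n d A \<and> spec_norm n d A \<le> sqrt U"
proof -
  define T where "T = {sqrt (\<Sum>i=1..n. (\<Sum>j=1..d. A i j * x j)\<^sup>2) | x. (\<Sum>j=1..d. (x j)\<^sup>2) = 1}"
  have sn: "spec_norm n d A = Sup T" unfolding spec_norm_def T_def ..
  have mem: "sqrt (\<Sum>i=1..n. (\<Sum>j=1..d. A i j * x0 j)\<^sup>2) \<in> T" unfolding T_def using x0 by blast
  have ne: "T \<noteq> {}" using mem by blast
  have ub: "\<forall>t\<in>T. t \<le> sqrt U" unfolding T_def using up by (auto intro: real_sqrt_le_mono)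
  have bdd: "bdd_above T" using ub by (auto simp: bdd_above_def)
  have "Sup T \<le> sqrt U" using ne ub by (intro cSup_least) auto
  moreover have "sqrt L \<le> Sup T"
    using cSup_upper[OF mem bdd] lo real_sqrt_le_mono order_trans by blast
  ultimately show ?thesis unfolding sn by simp
qed

lemma pAB_sq: "(pA v x k)\<^sup>2 + (pB v x k)\<^sup>2 = ((v (2*k-1))\<^sup>2 + (v (2*k))\<^sup>2) * ((x (2*k-1))\<^sup>2 + (x (2*k))\<^sup>2)"
  unfolding pA_def pB_def by (simp add: power2_eq_square algebra_simps)

lemma plane_le_one:
  fixes x :: "nat \<Rightarrow> real"
  assumes "(\<Sum>j=1..2*m. (x j)\<^sup>2) = 1" "k \<in> {1..m}"
  shows "(x (2*k-1))\<^sup>2 + (x (2*k))\<^sup>2 \<le> 1"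
proof -
  have "(\<Sum>k=1..m. (x (2*k-1))\<^sup>2 + (x (2*k))\<^sup>2) = 1" using assms(1) sum_pairs[of "\<lambda>j. (x j)\<^sup>2" m] by simp
  moreover have "(x (2*k-1))\<^sup>2 + (x (2*k))\<^sup>2 \<le> (\<Sum>k=1..m. (x (2*k-1))\<^sup>2 + (x (2*k))\<^sup>2)"
    by (rule member_le_sum) (use assms(2) in auto)
  ultimately show ?thesis by simp
qed

theorem lemma1:
  fixes d :: nat and \<theta> :: real and u :: "nat \<Rightarrow> real" and v :: "nat \<Rightarrow> real"
    and c C :: real
  assumes "even d" and "d \<ge> 2" and "\<theta> > 1"
    and "(\<Sum>j=1..d. (v j)\<^sup>2) = 1"
    and "0 < c" and "c \<le> C" and "\<forall>j\<ge>1. c \<le> \<bar>u j\<bar> \<and> \<bar>u j\<bar> \<le> C"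
    and "(\<lambda>n. \<Sum>j=1..n-1. \<bar>(u (j+1))\<^sup>2 - (u j)\<^sup>2\<bar>) \<in> o(\<lambda>n. real n)"
    and "\<forall>k\<in>{1..d div 2}. exp (\<i> * complex_of_real (2 * rope_freq \<theta> d k)) \<noteq> 1"
    and "\<forall>k\<in>{1..d div 2}. \<forall>l\<in>{1..d div 2}. k \<noteq> l \<longrightarrow>
           exp (\<i> * complex_of_real (rope_freq \<theta> d k + rope_freq \<theta> d l)) \<noteq> 1 \<and>
           exp (\<i> * complex_of_real (rope_freq \<theta> d k - rope_freq \<theta> d l)) \<noteq> 1"
  shows "((\<lambda>n. spec_norm n d (rope \<theta> d (\<lambda>i j. u i * v j)) / spec_norm n d (\<lambda>i j. u i * v j)
              - (1 / sqrt 2) * Max (plane_norm v ` {1..d div 2})) \<longlonglongrightarrow> 0) \<and>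
         sqrt (2 / real d) \<le> Max (plane_norm v ` {1..d div 2}) \<and>
         Max (plane_norm v ` {1..d div 2}) \<le> 1"
proof -
  define m where "m = d div 2"
  have dm: "d = 2*m" using assms(1) unfolding m_def by simp
  have m1: "m \<ge> 1" using assms(2) dm by simp
  define K where "K = {1..m}"
  have Kfin: "finite K" "K \<noteq> {}" using m1 unfolding K_def by auto
  define w where "w k = rope_freq \<theta> d k" for k
  define S where "S n = (\<Sum>i=1..n. (u i)\<^sup>2)" for n
  define M where "M = Max (plane_norm v ` {1..d div 2})"
  have Kd: "{1..d div 2} = K" unfolding K_def m_def ..
  have pn2: "(plane_norm v k)\<^sup>2 = (v (2*k-1))\<^sup>2 + (v (2*k))\<^sup>2" for k
    unfolding plane_norm_def by simp
  have pn0: "plane_norm v k \<ge> 0" for k unfolding plane_norm_def by simp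
  have Mge: "plane_norm v k \<le> M" if "k \<in> K" for k unfolding M_def Kd using Kfin that by simp
  have "M \<in> plane_norm v ` K" unfolding M_def Kd using Kfin by (intro Max_in) auto
  then obtain k0 where k0: "k0 \<in> K" "plane_norm v k0 = M" by auto
  have M0: "M \<ge> 0" using k0 pn0 by metis
  have vunit: "(\<Sum>j=1..2*m. (v j)\<^sup>2) = 1" using assms(4) dm by simp
  have vsum: "(\<Sum>k\<in>K. (plane_norm v k)\<^sup>2) = 1"
    unfolding K_def pn2 using vunit sum_pairs[of "\<lambda>j. (v j)\<^sup>2" m] by simp
  have vplane: "(plane_norm v k)\<^sup>2 \<le> 1" if "k \<in> K" for k
    unfolding pn2 using plane_le_one[OF vunit] that K_def by simp
  have Mle1: "M \<le> 1"
  proof -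
    have "M\<^sup>2 \<le> 1\<^sup>2" using vplane[OF k0(1)] k0(2) by simp
    then show ?thesis by (rule power2_le_imp_le) simp
  qed
  have Mlow: "sqrt (2 / real d) \<le> M"
  proof -
    have "1 = (\<Sum>k\<in>K. (plane_norm v k)\<^sup>2)" using vsum by simp
    also have "\<dots> \<le> (\<Sum>k\<in>K. M\<^sup>2)"
      by (intro sum_mono power_mono Mge pn0)
    also have "\<dots> = real m * M\<^sup>2" unfolding K_def by simp
    finally have "1 \<le> real m * M\<^sup>2" .
    then have "2 / real d \<le> M\<^sup>2" using m1 dm by (simp add: field_simps)
    then have "sqrt (2 / real d) \<le> sqrt (M\<^sup>2)" by (rule real_sqrt_le_mono)
    then show ?thesis using M0 by simp
  qed
  show ?thesis
  proof (intro conjI)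
    show "sqrt (2 / real d) \<le> Max (plane_norm v ` {1..d div 2})" using Mlow unfolding M_def .
    show "Max (plane_norm v ` {1..d div 2}) \<le> 1" using Mle1 unfolding M_def .
    show "(\<lambda>n. spec_norm n d (rope \<theta> d (\<lambda>i j. u i * v j)) / spec_norm n d (\<lambda>i j. u i * v j)
              - (1 / sqrt 2) * Max (plane_norm v ` {1..d div 2})) \<longlonglongrightarrow> 0"
    proof -
      have Vlim: "(\<lambda>n. (\<Sum>j=1..n-1. \<bar>(u (j+1))\<^sup>2 - (u j)\<^sup>2\<bar>) / real n) \<longlonglongrightarrow> 0"
        using smalloD_tendsto[OF assms(8)] by simp
      have Spos: "S n > 0" if "n \<ge> 1" for n
      proof -
        have "c \<le> \<bar>u 1\<bar>" using assms(7) by auto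
        then have "0 < (u 1)\<^sup>2" using assms(5) by auto
        also have "(u 1)\<^sup>2 \<le> S n" unfolding S_def by (rule member_le_sum) (use that in auto)
        finally show ?thesis .
      qed
      have hk: "1 \<le> k \<and> k \<le> d div 2" if "k \<in> K" for k using that unfolding K_def m_def by auto
      have cisp: "cis (w k + w l) \<noteq> 1" if "k \<in> K" "l \<in> K" for k l
      proof (cases "k = l")
        case True
        have h: "exp (\<i> * complex_of_real (2 * w k)) \<noteq> 1" using assms(9) that(1) unfolding Kd w_def by blast
        have "w k + w l = 2 * w k" using True by simp
        then show ?thesis using h by (metis cis_conv_exp)
      next
        case False
        have h: "exp (\<i> * complex_of_real (w k + w l)) \<noteq> 1" using assms(10) that False unfolding Kd w_def by blast
        then show ?thesis by (metis cis_conv_exp)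
      qed
      have cism: "cis (w k - w l) \<noteq> 1" if "k \<in> K" "l \<in> K" "k \<noteq> l" for k l
      proof -
        have h: "exp (\<i> * complex_of_real (w k - w l)) \<noteq> 1" using assms(10) that unfolding Kd w_def by blast
        then show ?thesis by (metis cis_conv_exp)
      qed
      define D where "D k l n = \<bar>\<Sum>i=1..n. (u i)\<^sup>2 * cos (real i * (w k + w l))\<bar> + \<bar>\<Sum>i=1..n. (u i)\<^sup>2 * sin (real i * (w k + w l))\<bar>
          + (if k = l then 0 else \<bar>\<Sum>i=1..n. (u i)\<^sup>2 * cos (real i * (w k - w l))\<bar> + \<bar>\<Sum>i=1..n. (u i)\<^sup>2 * sin (real i * (w k - w l))\<bar>)" for k l n
      define E where "E n = (\<Sum>k\<in>K. \<Sum>l\<in>K. D k l n) / S n" for n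
      have Elim: "E \<longlonglongrightarrow> 0"
      proof -
        have Ee: "E n = (\<Sum>k\<in>K. \<Sum>l\<in>K. D k l n / S n)" for n
          unfolding E_def by (simp add: sum_divide_distrib)
        have "(\<lambda>n. D k l n / S n) \<longlonglongrightarrow> 0" if "k \<in> K" "l \<in> K" for k l
        proof -
          note P = osc_lim_cos_sin[OF assms(5) assms(7) Vlim cisp[OF that]]
          show ?thesis
          proof (cases "k = l")
            case True
            have "(\<lambda>n. D k l n / S n) = (\<lambda>n. \<bar>\<Sum>i=1..n. (u i)\<^sup>2 * cos (real i * (w k + w l))\<bar> / S n + \<bar>\<Sum>i=1..n. (u i)\<^sup>2 * sin (real i * (w k + w l))\<bar> / S n)"
              unfolding D_def using True by (simp add: add_divide_distrib)
            then show ?thesis using tendsto_add[OF P] unfolding S_def by simp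
          next
            case False
            note Q = osc_lim_cos_sin[OF assms(5) assms(7) Vlim cism[OF that False]]
            have "(\<lambda>n. D k l n / S n) = (\<lambda>n. \<bar>\<Sum>i=1..n. (u i)\<^sup>2 * cos (real i * (w k + w l))\<bar> / S n + \<bar>\<Sum>i=1..n. (u i)\<^sup>2 * sin (real i * (w k + w l))\<bar> / S n
               + (\<bar>\<Sum>i=1..n. (u i)\<^sup>2 * cos (real i * (w k - w l))\<bar> / S n + \<bar>\<Sum>i=1..n. (u i)\<^sup>2 * sin (real i * (w k - w l))\<bar> / S n))"
              unfolding D_def using False by (simp add: add_divide_distrib)
            then show ?thesis using tendsto_add[OF tendsto_add[OF P] tendsto_add[OF Q]] unfolding S_def by simp
          qed
        qed
        then show ?thesis unfolding Ee by (intro tendsto_null_sum) auto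
      qed
      define Q where "Q n x = (\<Sum>i=1..n. (\<Sum>j=1..d. rope \<theta> d (\<lambda>i j. u i * v j) i j * x j)\<^sup>2)" for n x
      have quad: "\<bar>Q n x - S n / 2 * (\<Sum>k\<in>K. (pA v x k)\<^sup>2 + (pB v x k)\<^sup>2)\<bar> \<le> S n * E n"
        if n: "n \<ge> 1" and x: "(\<Sum>j=1..d. (x j)\<^sup>2) = 1" for n x
      proof -
        have x2: "(\<Sum>j=1..2*m. (x j)\<^sup>2) = 1" using x dm by simp
        have AB: "\<forall>k\<in>K. \<bar>pA v x k\<bar> \<le> 1 \<and> \<bar>pB v x k\<bar> \<le> 1"
        proof
          fix k assume k: "k \<in> K"
          have "(pA v x k)\<^sup>2 + (pB v x k)\<^sup>2 \<le> 1 * 1" unfolding pAB_sq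
            using vplane[OF k] plane_le_one[OF x2, of k] k unfolding pn2 K_def
            by (intro mult_mono) auto
          then have "(pA v x k)\<^sup>2 \<le> 1" "(pB v x k)\<^sup>2 \<le> 1" by (simp_all add: add_nonneg_eq_0_iff) (smt (verit) zero_le_power2)+
          then show "\<bar>pA v x k\<bar> \<le> 1 \<and> \<bar>pB v x k\<bar> \<le> 1" by (simp add: abs_square_le_1)
        qed
        have Qe: "Q n x = (\<Sum>i=1..n. (u i)\<^sup>2 * (\<Sum>k\<in>K. cos (real i * w k) * pA v x k + sin (real i * w k) * pB v x k)\<^sup>2)"
          unfolding Q_def row_expand[OF dm] K_def w_def by (simp add: power_mult_distrib)
        have "\<bar>Q n x - S n / 2 * (\<Sum>k\<in>K. (pA v x k)\<^sup>2 + (pB v x k)\<^sup>2)\<bar> \<le> (\<Sum>k\<in>K. \<Sum>l\<in>K. D k l n)"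
          unfolding Qe S_def D_def by (rule quad_bound[OF Kfin(1) AB])
        also have "\<dots> = S n * E n" unfolding E_def using Spos[OF n] by simp
        finally show ?thesis .
      qed
      have sAB_le: "(\<Sum>k\<in>K. (pA v x k)\<^sup>2 + (pB v x k)\<^sup>2) \<le> M\<^sup>2" if x: "(\<Sum>j=1..d. (x j)\<^sup>2) = 1" for x
      proof -
        have xs: "(\<Sum>k\<in>K. (x (2*k-1))\<^sup>2 + (x (2*k))\<^sup>2) = 1"
          using x dm sum_pairs[of "\<lambda>j. (x j)\<^sup>2" m] unfolding K_def by simp
        have "(\<Sum>k\<in>K. (pA v x k)\<^sup>2 + (pB v x k)\<^sup>2) = (\<Sum>k\<in>K. (plane_norm v k)\<^sup>2 * ((x (2*k-1))\<^sup>2 + (x (2*k))\<^sup>2))"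
          unfolding pAB_sq pn2 ..
        also have "\<dots> \<le> (\<Sum>k\<in>K. M\<^sup>2 * ((x (2*k-1))\<^sup>2 + (x (2*k))\<^sup>2))"
          by (intro sum_mono mult_right_mono power_mono Mge pn0) auto
        also have "\<dots> = M\<^sup>2" using xs by (simp add: sum_distrib_left[symmetric])
        finally show ?thesis .
      qed
      define x0 where "x0 j = (if j = 2*k0-1 then 1 else (0::real))" for j
      have k0b: "1 \<le> k0" "k0 \<le> m" using k0(1) K_def by auto
      have x0u: "(\<Sum>j=1..d. (x0 j)\<^sup>2) = 1"
      proof -
        have mem: "2*k0-1 \<in> {1..d}" using k0b dm by auto
        have "(\<Sum>j=1..d. (x0 j)\<^sup>2) = (\<Sum>j\<in>{1..d}. if j = 2*k0-1 then 1 else 0)"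
          by (rule sum.cong) (auto simp: x0_def)
        also have "\<dots> = 1" using mem by (subst sum.delta) auto
        finally show ?thesis .
      qed
      have sAB_x0: "(\<Sum>k\<in>K. (pA v x0 k)\<^sup>2 + (pB v x0 k)\<^sup>2) = M\<^sup>2"
      proof -
        have "(\<Sum>k\<in>K. (pA v x0 k)\<^sup>2 + (pB v x0 k)\<^sup>2) = (\<Sum>k\<in>K. if k = k0 then (plane_norm v k)\<^sup>2 else 0)"
        proof (rule sum.cong[OF refl])
          fix k assume "k \<in> K" then have "k \<ge> 1" by (simp add: K_def)
          then have "x0 (2*k-1) = (if k = k0 then 1 else 0)" using k0b by (auto simp: x0_def)
          moreover have "x0 (2*k) = 0"
          proof -
            have "2*k \<noteq> 2*k0-1" using k0b by presburger
            then show ?thesis by (simp add: x0_def)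
          qed
          ultimately show "(pA v x0 k)\<^sup>2 + (pB v x0 k)\<^sup>2 = (if k = k0 then (plane_norm v k)\<^sup>2 else 0)"
            unfolding pAB_sq pn2 by simp
        qed
        also have "\<dots> = M\<^sup>2" using k0 Kfin by (simp add: sum.delta)
        finally show ?thesis .
      qed
      have specX: "spec_norm n d (\<lambda>i j. u i * v j) = sqrt (S n)" if n: "n \<ge> 1" for n
      proof -
        have QX: "(\<Sum>i=1..n. (\<Sum>j=1..d. u i * v j * x j)\<^sup>2) = S n * (\<Sum>j=1..d. v j * x j)\<^sup>2" for x
        proof -
          have "(\<Sum>j=1..d. u i * v j * x j) = u i * (\<Sum>j=1..d. v j * x j)" for i by (simp add: sum_distrib_left mult.assoc)
          then show ?thesis unfolding S_def by (simp add: power_mult_distrib sum_distrib_right)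
        qed
        have cs: "(\<Sum>j=1..d. v j * x j)\<^sup>2 \<le> 1" if "(\<Sum>j=1..d. (x j)\<^sup>2) = 1" for x
          using Cauchy_Schwarz_ineq_sum[of v x "{1..d}"] that assms(4) by simp
        have vv: "(\<Sum>j=1..d. v j * v j) = 1" using assms(4) by (simp add: power2_eq_square)
        have up: "(\<Sum>i=1..n. (\<Sum>j=1..d. u i * v j * x j)\<^sup>2) \<le> S n" if "(\<Sum>j=1..d. (x j)\<^sup>2) = 1" for x
          unfolding QX using cs[OF that] Spos[OF n] by (simp add: mult_left_le)
        have lo: "S n \<le> (\<Sum>i=1..n. (\<Sum>j=1..d. u i * v j * v j)\<^sup>2)" unfolding QX vv by simp
        have "sqrt (S n) \<le> spec_norm n d (\<lambda>i j. u i * v j) \<and> spec_norm n d (\<lambda>i j. u i * v j) \<le> sqrt (S n)"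
          by (rule spec_bounds[where A="\<lambda>i j. u i * v j", OF up assms(4) lo])
        then show ?thesis by linarith
      qed
      define L where "L = M\<^sup>2 / 2"
      have specR: "sqrt (S n * (L - E n)) \<le> spec_norm n d (rope \<theta> d (\<lambda>i j. u i * v j)) \<and> spec_norm n d (rope \<theta> d (\<lambda>i j. u i * v j)) \<le> sqrt (S n * (L + E n))"
        if n: "n \<ge> 1" for n
      proof -
        have Sp: "S n > 0" by (rule Spos[OF n])
        have up: "Q n x \<le> S n * (L + E n)" if x: "(\<Sum>j=1..d. (x j)\<^sup>2) = 1" for x
        proof -
          have "Q n x \<le> S n / 2 * (\<Sum>k\<in>K. (pA v x k)\<^sup>2 + (pB v x k)\<^sup>2) + S n * E n" using quad[OF n x] by linarith
          also have "\<dots> \<le> S n / 2 * M\<^sup>2 + S n * E n" using sAB_le[OF x] Sp by (intro add_right_mono mult_left_mono) auto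
          also have "\<dots> = S n * (L + E n)" unfolding L_def by (simp add: algebra_simps)
          finally show ?thesis .
        qed
        have lo: "S n * (L - E n) \<le> Q n x0"
        proof -
          have "S n * (L - E n) = S n / 2 * (\<Sum>k\<in>K. (pA v x0 k)\<^sup>2 + (pB v x0 k)\<^sup>2) - S n * E n" unfolding sAB_x0 L_def by (simp add: algebra_simps)
          also have "\<dots> \<le> Q n x0" using quad[OF n x0u] by linarith
          finally show ?thesis .
        qed
        show ?thesis by (rule spec_bounds[OF up[unfolded Q_def] x0u lo[unfolded Q_def]])
      qed
      have ratio: "sqrt (L - E n) \<le> spec_norm n d (rope \<theta> d (\<lambda>i j. u i * v j)) / spec_norm n d (\<lambda>i j. u i * v j)
          \<and> spec_norm n d (rope \<theta> d (\<lambda>i j. u i * v j)) / spec_norm n d (\<lambda>i j. u i * v j) \<le> sqrt (L + E n)"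
        if n: "n \<ge> 1" for n
      proof -
        have sp: "sqrt (S n) > 0" using Spos[OF n] by simp
        from specR[OF n] have a: "sqrt (S n) * sqrt (L - E n) \<le> spec_norm n d (rope \<theta> d (\<lambda>i j. u i * v j))"
          "spec_norm n d (rope \<theta> d (\<lambda>i j. u i * v j)) \<le> sqrt (S n) * sqrt (L + E n)"
          by (simp_all add: real_sqrt_mult)
        then show ?thesis unfolding specX[OF n] using sp by (simp add: field_simps)
      qed
      have lim1: "(\<lambda>n. sqrt (L - E n)) \<longlonglongrightarrow> sqrt L"
        using tendsto_real_sqrt[OF tendsto_diff[OF tendsto_const Elim], of L] by simp
      have lim2: "(\<lambda>n. sqrt (L + E n)) \<longlonglongrightarrow> sqrt L"
        using tendsto_real_sqrt[OF tendsto_add[OF tendsto_const Elim], of L] by simp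
      have sL: "sqrt L = 1 / sqrt 2 * M" unfolding L_def using M0 by (simp add: real_sqrt_divide)
      have "(\<lambda>n. spec_norm n d (rope \<theta> d (\<lambda>i j. u i * v j)) / spec_norm n d (\<lambda>i j. u i * v j)) \<longlonglongrightarrow> sqrt L"
      proof (rule tendsto_sandwich[OF _ _ lim1 lim2])
        show "\<forall>\<^sub>F n in sequentially. sqrt (L - E n) \<le> spec_norm n d (rope \<theta> d (\<lambda>i j. u i * v j)) / spec_norm n d (\<lambda>i j. u i * v j)"
          by (rule eventually_sequentiallyI[of 1]) (use ratio in blast)
        show "\<forall>\<^sub>F n in sequentially. spec_norm n d (rope \<theta> d (\<lambda>i j. u i * v j)) / spec_norm n d (\<lambda>i j. u i * v j) \<le> sqrt (L + E n)"
          by (rule eventually_sequentiallyI[of 1]) (use ratio in blast)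
      qed
      then show ?thesis unfolding M_def[symmetric] sL by (rule LIM_zero)
    qed
  qed
qed

end
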